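(* For $n\in\mathbb{N}^\star$ let $\phi_n(x)=\int_0^\pi e^{-2x\sin\eta}e^{2in\eta}\,\mathrm{d}\eta$ and define $\varphi_n(x)=n\,\phi_n(nx)$ for $x>0$. Define functions $\Psi_k$ on $(0,\infty)$ by $$\Psi_0(x)=\frac{x}{1+x^2},\qquad \Psi_{k+1}(x)=\frac{x^2}{4(1+x^2)}\Big(\Psi_k''(x)+\frac1x\Psi_k'(x)\Big),\quad k\in\mathbb{N}.$$ For $n\ge1$ and $N\in\mathbb{N}$ define $g_{n,N}$ by $\varphi_n(x)=\sum_{k=0}^N n^{-2k}\Psi_k(x)+g_{n,N}(x)$, $x>0$. Then for every $N\in\mathbb{N}$ and $\delta\in[0,\tfrac13)$ there is a constant $C=C(N,\delta)>0$, independent of $n$ and $x$, such that $$|g_{n,N}(x)|\le\frac{C}{n^{2N+\frac23-\delta}}\,\frac{x^\delta}{1+x}\qquad\text{for all }x>0,\ n\ge1.$$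
   Context: $\mathbb{N}=\{0,1,2,\dots\}$, $\mathbb{N}^\star=\{1,2,\dots\}$. *)

theory Defs
  imports "HOL-Analysis.Analysis"
begin

definition phi :: "nat \<Rightarrow> real \<Rightarrow> complex" where
  "phi n x = integral {0..pi}
     (\<lambda>\<eta>. exp (complex_of_real (- 2 * x * sin \<eta>)) * exp (\<i> * complex_of_real (2 * real n * \<eta>)))"

definition varphi :: "nat \<Rightarrow> real \<Rightarrow> complex" where
  "varphi n x = of_nat n * phi n (real n * x)"

text \<open>Psi_k; only values at x > 0 are meaningful (derivatives there depend only on values near x).\<close>
fun Psi :: "nat \<Rightarrow> real \<Rightarrow> real" where
  "Psi 0 x = x / (1 + x\<^sup>2)"
| "Psi (Suc k) x = x\<^sup>2 / (4 * (1 + x\<^sup>2)) * (deriv (deriv (Psi k)) x + deriv (Psi k) x / x)"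

definition g :: "nat \<Rightarrow> nat \<Rightarrow> real \<Rightarrow> complex" where
  "g n N x = varphi n x - complex_of_real (\<Sum>k=0..N. real n powr (- 2 * real k) * Psi k x)"

end

theory Submission
  imports Defs
begin

definition ev :: "(real \<times> nat \<times> nat) list \<Rightarrow> real \<Rightarrow> real" where
  "ev cs x = (\<Sum>(c,a,b)\<leftarrow>cs. c * x ^ a / (1 + x\<^sup>2) ^ b)"

definition dl :: "(real \<times> nat \<times> nat) list \<Rightarrow> (real \<times> nat \<times> nat) list" where
  "dl cs = concat (map (\<lambda>(c,a,b). [(c * real a, a - 1, b), (-2 * real b * c, a + 1, b + 1)]) cs)"

definition th :: "(real \<times> nat \<times> nat) list \<Rightarrow> (real \<times> nat \<times> nat) list" where
  "th cs = concat (map (\<lambda>(c,a,b). [(c * real a, a, b), (-2 * real b * c, a + 2, b + 1)]) cs)"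

definition sc :: "(real \<times> nat \<times> nat) list \<Rightarrow> (real \<times> nat \<times> nat) list" where
  "sc cs = map (\<lambda>(c,a,b). (c / 4, a, b + 1)) cs"

fun Pl :: "nat \<Rightarrow> (real \<times> nat \<times> nat) list" where
  "Pl 0 = [(1,1,1)]"
| "Pl (Suc k) = sc (th (th (Pl k)))"

lemma ev_Nil[simp]: "ev [] x = 0" by (simp add: ev_def)
lemma ev_Cons[simp]: "ev ((c,a,b) # cs) x = c * x ^ a / (1 + x\<^sup>2) ^ b + ev cs x"
  by (simp add: ev_def)
lemma ev_append[simp]: "ev (xs @ ys) x = ev xs x + ev ys x"
  by (simp add: ev_def)

lemma term_alg:
  fixes w :: real assumes w: "w > 0"
  shows "c * (real a * x ^ (a - 1)) * inverse w ^ b + c * x ^ a * (real b * inverse w ^ (b - 1) * (- (inverse w * (2 * x) * inverse w)))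
     = c * real a * x ^ (a - 1) / w ^ b + (-2 * real b * c) * x ^ (a + 1) / w ^ (b + 1)"
proof (cases b)
  case 0 then show ?thesis by (simp add: field_simps)
next
  case (Suc b')
  have "inverse w ^ (b - 1) * (inverse w * inverse w) = inverse w ^ (b + 1)"
    using Suc by (simp add: power_Suc2 mult.assoc)
  then have "c * x ^ a * (real b * inverse w ^ (b - 1) * (- (inverse w * (2 * x) * inverse w)))
      = (-2 * real b * c) * x ^ (a + 1) * inverse w ^ (b + 1)"
  proof -
    have "c * x ^ a * (real b * inverse w ^ (b - 1) * (- (inverse w * (2 * x) * inverse w)))
        = (-2 * real b * c) * (x ^ a * x) * (inverse w ^ (b - 1) * (inverse w * inverse w))"
      by (simp add: mult_ac)
    then show ?thesis using \<open>inverse w ^ (b - 1) * (inverse w * inverse w) = inverse w ^ (b + 1)\<close>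
      using Suc by (simp add: power_Suc2 mult.assoc)
  qed
  then show ?thesis by (simp add: divide_inverse power_inverse)
qed

lemma term_deriv:
  "((\<lambda>x. c * x ^ a / (1 + x\<^sup>2) ^ b) has_real_derivative
     (c * real a * x ^ (a - 1) / (1 + x\<^sup>2) ^ b + (-2 * real b * c) * x ^ (a + 1) / (1 + x\<^sup>2) ^ (b + 1))) (at x)"
proof -
  have pos: "(1 + x\<^sup>2) > 0" by (intro add_pos_nonneg) auto
  have "((\<lambda>x. c * x ^ a * inverse (1 + x\<^sup>2) ^ b) has_real_derivative
     (c * (real a * x ^ (a - 1)) * inverse (1 + x\<^sup>2) ^ b + c * x ^ a * (real b * inverse (1 + x\<^sup>2) ^ (b - 1) * (- (inverse (1 + x\<^sup>2) * (2 * x) * inverse (1 + x\<^sup>2)))))) (at x)"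
    using pos by (auto intro!: derivative_eq_intros DERIV_pow simp: power2_eq_square)
  then show ?thesis unfolding term_alg[OF pos] by (simp add: divide_inverse power_inverse)
qed

lemma ev_deriv: "(ev cs has_real_derivative ev (dl cs) x) (at x)"
proof (induction cs)
  case Nil then show ?case by (simp add: dl_def ev_def)
next
  case (Cons t cs)
  obtain c a b where t: "t = (c,a,b)" by (cases t) auto
  have e: "ev (t # cs) = (\<lambda>x. c * x ^ a / (1 + x\<^sup>2) ^ b + ev cs x)" using t by auto
  have d: "dl (t # cs) = [(c * real a, a - 1, b), (-2 * real b * c, a + 1, b + 1)] @ dl cs"
    using t by (simp add: dl_def)
  have "ev (dl (t#cs)) x = (c * real a * x ^ (a - 1) / (1 + x\<^sup>2) ^ b + (-2 * real b * c) * x ^ (a + 1) / (1 + x\<^sup>2) ^ (b + 1)) + ev (dl cs) x"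
    unfolding d by simp
  then show ?case unfolding e by (simp only: DERIV_add[OF term_deriv Cons.IH])
qed

lemma deriv_ev: "deriv (ev cs) = ev (dl cs)"
  using ev_deriv DERIV_imp_deriv by blast

lemma ev_th: "ev (th cs) x = x * ev (dl cs) x"
proof (induction cs)
  case Nil then show ?case by (simp add: dl_def th_def)
next
  case (Cons t cs)
  obtain c a b where t: "t = (c,a,b)" by (cases t) auto
  have 1: "x * (c * real a * x ^ (a - 1) / (1 + x\<^sup>2) ^ b) = c * real a * x ^ a / (1 + x\<^sup>2) ^ b"
    by (cases a) auto
  have 2: "x * ((-2 * real b * c) * x ^ (a + 1) / (1 + x\<^sup>2) ^ (b + 1)) = (-2 * real b * c) * x ^ (a + 2) / (1 + x\<^sup>2) ^ (b + 1)"
    by simp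
  have "ev (th (t # cs)) x = c * real a * x ^ a / (1 + x\<^sup>2) ^ b + (-2 * real b * c) * x ^ (a + 2) / (1 + x\<^sup>2) ^ (b + 1) + ev (th cs) x"
    using t by (simp add: th_def ev_def)
  moreover have "ev (dl (t # cs)) x = c * real a * x ^ (a - 1) / (1 + x\<^sup>2) ^ b + (-2 * real b * c) * x ^ (a + 1) / (1 + x\<^sup>2) ^ (b + 1) + ev (dl cs) x"
    using t by (simp add: dl_def ev_def)
  ultimately show ?case using Cons.IH 1 2 by (simp only: distrib_left)
qed

lemma ev_sc: "ev (sc cs) x = ev cs x / (4 * (1 + x\<^sup>2))"
proof (induction cs)
  case Nil then show ?case by (simp add: sc_def)
next
  case (Cons t cs)
  obtain c a b where t: "t = (c,a,b)" by (cases t) auto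
  have pos: "(1 + x\<^sup>2) ^ b > 0" by (intro zero_less_power add_pos_nonneg) auto
  have "ev (sc (t # cs)) x = c / 4 * x ^ a / (1 + x\<^sup>2) ^ (b + 1) + ev (sc cs) x"
    using t by (simp add: sc_def ev_def)
  moreover have "c / 4 * x ^ a / (1 + x\<^sup>2) ^ (b + 1) = (c * x ^ a / (1 + x\<^sup>2) ^ b) / (4 * (1 + x\<^sup>2))"
    using pos by (simp add: field_simps)
  ultimately show ?case using Cons t
    by (simp add: add_divide_distrib)
qed

lemma ev_dl_th: "ev (dl (th cs)) x = ev (dl cs) x + x * ev (dl (dl cs)) x"
proof -
  have e: "(\<lambda>x. x * ev (dl cs) x) = ev (th cs)" using ev_th by auto
  have d: "(ev (th cs) has_real_derivative (1 * ev (dl cs) x + x * ev (dl (dl cs)) x)) (at x)"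
    using DERIV_mult[OF DERIV_ident ev_deriv[of "dl cs"]] unfolding e[symmetric] by (simp add: mult.commute)
  show ?thesis using DERIV_unique[OF ev_deriv[of "th cs" x] d] by simp
qed

lemma Pl_rel: "4 * (1 + x\<^sup>2) * ev (Pl (Suc k)) x = x\<^sup>2 * ev (dl (dl (Pl k))) x + x * ev (dl (Pl k)) x"
proof -
  have pos: "(1 + x\<^sup>2) > 0" by (simp add: add_pos_nonneg)
  show ?thesis using pos by (simp add: ev_sc ev_th ev_dl_th field_simps power2_eq_square)
qed

lemma Psi_ev: "Psi k = ev (Pl k)"
proof (induction k)
  case 0 then show ?case by (auto simp: fun_eq_iff)
next
  case (Suc k)
  show ?case
  proof
    fix x :: real
    have pos: "(1 + x\<^sup>2) > 0" by (simp add: add_pos_nonneg)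
    show "Psi (Suc k) x = ev (Pl (Suc k)) x"
    proof (cases "x = 0")
      case True
      then show ?thesis using Pl_rel[of x k] by simp
    next
      case False
      have "ev (Pl (Suc k)) x = (x\<^sup>2 * ev (dl (dl (Pl k))) x + x * ev (dl (Pl k)) x) / (4 * (1 + x\<^sup>2))"
        using Pl_rel[of x k] pos by (simp add: field_simps)
      moreover have "x\<^sup>2 / (4 * (1 + x\<^sup>2)) * (A + B / x) = (x\<^sup>2 * A + x * B) / (4 * (1 + x\<^sup>2))" for A B
      proof -
        have "x * x * (B / x) = x * B" using False by simp
        then have "x\<^sup>2 * (A + B / x) = x\<^sup>2 * A + x * B" by (simp add: power2_eq_square distrib_left)
        then show ?thesis by (metis times_divide_eq_left mult.commute)
      qed
      ultimately show ?thesis unfolding Psi.simps Suc deriv_ev by simp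
    qed
  qed
qed

definition invr :: "(real \<times> nat \<times> nat) list \<Rightarrow> bool" where
  "invr cs = (\<forall>(c,a,b)\<in>set cs. 1 \<le> a \<and> a + 1 \<le> 2 * b)"

lemma invr_Pl: "invr (Pl k)"
proof (induction k)
  case 0 then show ?case by (simp add: invr_def)
next
  case (Suc k)
  have th: "invr cs \<Longrightarrow> invr (th cs)" for cs by (auto simp: invr_def th_def)
  have sc: "invr cs \<Longrightarrow> invr (sc cs)" for cs by (auto simp: invr_def sc_def)
  show ?case using Suc th sc by simp
qed

definition cw :: "(real \<times> nat \<times> nat) list \<Rightarrow> real" where
  "cw cs = (\<Sum>(c,a,b)\<leftarrow>cs. \<bar>c\<bar>)"

lemma term_bound:
  fixes x :: real
  assumes "1 \<le> a" "a + 1 \<le> 2 * b" "x > 0"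
  shows "x ^ a / (1 + x\<^sup>2) ^ b \<le> x / (1 + x\<^sup>2)"
proof -
  obtain a' where a: "a = Suc a'" using assms by (cases a) auto
  obtain b' where b: "b = Suc b'" using assms by (cases b) auto
  have ab: "a' \<le> 2 * b'" using assms a b by simp
  have pos: "(1 + x\<^sup>2) > 0" using zero_le_power2[of x] by linarith
  have m: "max 1 x ^ 2 \<le> 1 + x\<^sup>2" by (cases "x \<le> 1") (auto simp: max_def)
  have "x ^ a' \<le> max 1 x ^ a'" using assms by (intro power_mono) auto
  also have "\<dots> \<le> max 1 x ^ (2 * b')" using ab by (intro power_increasing) auto
  also have "\<dots> = (max 1 x ^ 2) ^ b'" by (simp add: power_mult)
  also have "\<dots> \<le> (1 + x\<^sup>2) ^ b'" using m by (intro power_mono) auto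
  finally have "x ^ a' \<le> (1 + x\<^sup>2) ^ b'" .
  then have le1: "x ^ a' / (1 + x\<^sup>2) ^ b' \<le> 1" using pos by simp
  have "x ^ a / (1 + x\<^sup>2) ^ b = (x / (1 + x\<^sup>2)) * (x ^ a' / (1 + x\<^sup>2) ^ b')"
    unfolding a b by simp
  also have "\<dots> \<le> (x / (1 + x\<^sup>2)) * 1" using le1 pos assms
    by (intro mult_left_mono) auto
  finally show ?thesis by simp
qed

lemma ev_bound:
  assumes "invr cs" "x > 0"
  shows "\<bar>ev cs x\<bar> \<le> cw cs * (x / (1 + x\<^sup>2))"
  using assms(1)
proof (induction cs)
  case Nil then show ?case by (simp add: cw_def)
next
  case (Cons t cs)
  obtain c a b where t: "t = (c,a,b)" by (cases t) auto
  have i: "1 \<le> a" "a + 1 \<le> 2 * b" "invr cs" using Cons.prems t by (auto simp: invr_def)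
  have pos: "(1 + x\<^sup>2) > 0" by (simp add: add_pos_nonneg)
  have "\<bar>c * x ^ a / (1 + x\<^sup>2) ^ b\<bar> = \<bar>c\<bar> * (x ^ a / (1 + x\<^sup>2) ^ b)"
    using assms pos by (simp add: abs_mult)
  also have "\<dots> \<le> \<bar>c\<bar> * (x / (1 + x\<^sup>2))"
    using mult_left_mono[OF term_bound[OF i(1,2) assms(2)] abs_ge_zero[of c]] by simp
  finally have "\<bar>c * x ^ a / (1 + x\<^sup>2) ^ b\<bar> \<le> \<bar>c\<bar> * (x / (1 + x\<^sup>2))" .
  moreover have "cw (t # cs) * (x / (1 + x\<^sup>2)) = \<bar>c\<bar> * (x / (1 + x\<^sup>2)) + cw cs * (x / (1 + x\<^sup>2))"
  proof -
    have "cw (t # cs) = \<bar>c\<bar> + cw cs" using t by (simp add: cw_def)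
    then show ?thesis by (simp only: distrib_right)
  qed
  moreover have "ev (t # cs) x = c * x ^ a / (1 + x\<^sup>2) ^ b + ev cs x" using t by simp
  moreover note abs_triangle_ineq[of "c * x ^ a / (1 + x\<^sup>2) ^ b" "ev cs x"]
  ultimately show ?case using Cons.IH[OF i(3)] by linarith
qed

lemma ev_zero: "invr cs \<Longrightarrow> ev cs 0 = 0"
  by (induction cs) (auto simp: invr_def)

lemma Pl1: "Pl 1 = [(1/4,1,2),(-1/2,3,3),(-3/2,3,3),(2,5,4)]"
  by (simp add: sc_def th_def)

lemma Psi1_alg:
  fixes w x :: real assumes w: "w = 1 + x\<^sup>2"
  shows "1/4 * x / w^2 + -1/2 * x^3/w^3 + -3/2 * x^3/w^3 + 2 * x^5/w^4 = x * (x^4 - 6 * x\<^sup>2 + 1) / (4 * w ^ 4)"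
proof -
  have "w > 0" using w by (simp add: add_pos_nonneg)
  then have "1/4 * x / w^2 + -1/2 * x^3/w^3 + -3/2 * x^3/w^3 + 2 * x^5/w^4 = (x * w^2 - 8 * x^3 * w + 8 * x^5) / (4 * w^4)"
    by (simp add: field_simps eval_nat_numeral)
  also have "x * w^2 - 8 * x^3 * w + 8 * x^5 = x * (x^4 - 6 * x\<^sup>2 + 1)"
    unfolding w by (simp add: algebra_simps eval_nat_numeral)
  finally show ?thesis .
qed

lemma Psi1_bound:
  assumes "x > 0" shows "\<bar>ev (Pl 1) x\<bar> \<le> x / (4 * (1 + x\<^sup>2))"
proof -
  have pos: "(1 + x\<^sup>2) > 0" by (intro add_pos_nonneg) auto
  have e: "ev (Pl 1) x = x * (x^4 - 6 * x\<^sup>2 + 1) / (4 * (1 + x\<^sup>2) ^ 4)"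
    unfolding Pl1 using Psi1_alg[OF refl, of x] by (simp add: add.assoc)
  have "\<bar>x^4 - 6 * x\<^sup>2 + 1\<bar> \<le> (1 + x\<^sup>2) ^ 3"
  proof -
    have s: "0 \<le> (x\<^sup>2 - 1)\<^sup>2" "0 \<le> x\<^sup>2" by auto
    have "\<bar>x^4 - 6 * x\<^sup>2 + 1\<bar> \<le> (1 + x\<^sup>2)^2"
      using s by (auto simp: abs_le_iff power2_eq_square algebra_simps eval_nat_numeral)
    also have "\<dots> \<le> (1 + x\<^sup>2) ^ 3" using pos by (intro power_increasing) auto
    finally show ?thesis .
  qed
  then have "x * \<bar>x^4 - 6 * x\<^sup>2 + 1\<bar> \<le> x * (1 + x\<^sup>2) ^ 3" using assms by (simp add: mult_left_mono)
  then have "\<bar>x * (x^4 - 6 * x\<^sup>2 + 1)\<bar> / (4 * (1 + x\<^sup>2) ^ 4) \<le> x * (1 + x\<^sup>2) ^ 3 / (4 * (1 + x\<^sup>2) ^ 4)"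
    using pos assms by (intro divide_right_mono) (auto simp: abs_mult)
  also have "\<dots> = x / (4 * (1 + x\<^sup>2))"
  proof -
    have "\<forall>w::real. w > 0 \<longrightarrow> x * w ^ 3 / (4 * w ^ 4) = x / (4 * w)" by (auto simp: eval_nat_numeral field_simps)
    then show ?thesis using pos by blast
  qed
  finally show ?thesis unfolding e using pos by (simp add: abs_divide)
qed

definition Ei :: "nat \<Rightarrow> real \<Rightarrow> real \<Rightarrow> complex" where
  "Ei n x t = exp (complex_of_real (- 2 * x * sin t)) * exp (\<i> * complex_of_real (2 * real n * t))"

definition Fj :: "nat \<Rightarrow> nat \<Rightarrow> real \<Rightarrow> complex" where
  "Fj n j x = integral {0..pi} (\<lambda>t. complex_of_real ((-2 * sin t) ^ j) * Ei n x t)"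

lemma phi_Fj: "phi n = Fj n 0" by (simp add: fun_eq_iff phi_def Fj_def Ei_def)

lemma Ei_alt: "Ei n x t = complex_of_real (exp (-2 * x * sin t)) * exp (\<i> * complex_of_real (2 * real n * t))"
  unfolding Ei_def exp_of_real by (rule refl)

lemma Ei_deriv_x: "((\<lambda>x. Ei n x t) has_vector_derivative complex_of_real (-2 * sin t) * Ei n x t) (at x within S)"
proof -
  have "((\<lambda>x. exp (-2 * x * sin t)) has_real_derivative exp (-2 * x * sin t) * (-2 * sin t)) (at x within S)"
    by (auto intro!: derivative_eq_intros)
  then have "((\<lambda>x. complex_of_real (exp (-2 * x * sin t))) has_vector_derivative complex_of_real (exp (-2 * x * sin t) * (-2 * sin t))) (at x within S)"
    by (rule has_vector_derivative_of_real)
  then have "((\<lambda>x. complex_of_real (exp (-2 * x * sin t)) * exp (\<i> * complex_of_real (2 * real n * t))) has_vector_derivative complex_of_real (exp (-2 * x * sin t) * (-2 * sin t)) * exp (\<i> * complex_of_real (2 * real n * t))) (at x within S)"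
    by (rule has_vector_derivative_mult_left)
  then show ?thesis by (simp add: Ei_alt mult_ac)
qed

lemma cont_Ei2: "continuous_on S (\<lambda>(x, t). complex_of_real ((-2 * sin t) ^ j) * Ei n x t)"
  unfolding Ei_def split_beta by (intro continuous_intros)

lemma cont_Ei1: "continuous_on S (\<lambda>t. complex_of_real ((-2 * sin t) ^ j) * Ei n x t)"
  unfolding Ei_def by (intro continuous_intros)

lemma Fj_integral: "((\<lambda>t. complex_of_real ((-2 * sin t) ^ j) * Ei n x t) has_integral Fj n j x) {0..pi}"
  unfolding Fj_def by (intro integrable_integral integrable_continuous_interval cont_Ei1)

lemma Fj_deriv: "(Fj n j has_vector_derivative Fj n (Suc j) x) (at x)"
proof -
  have "((\<lambda>x. integral (cbox 0 pi) (\<lambda>t. complex_of_real ((-2 * sin t) ^ j) * Ei n x t)) has_vector_derivative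
      integral (cbox 0 pi) (\<lambda>t. complex_of_real ((-2 * sin t) ^ Suc j) * Ei n x t)) (at x within UNIV)"
  proof (rule leibniz_rule_vector_derivative[where fx = "\<lambda>x t. complex_of_real ((-2 * sin t) ^ Suc j) * Ei n x t"])
    fix x t :: real
    show "((\<lambda>x. complex_of_real ((-2 * sin t) ^ j) * Ei n x t) has_vector_derivative
        complex_of_real ((-2 * sin t) ^ Suc j) * Ei n x t) (at x within UNIV)"
      using has_vector_derivative_mult_right[OF Ei_deriv_x, where a = "complex_of_real ((-2 * sin t) ^ j)"]
      by (simp add: mult_ac)
  next
    fix x :: real
    show "(\<lambda>t. complex_of_real ((-2 * sin t) ^ j) * Ei n x t) integrable_on cbox 0 pi"
      unfolding cbox_interval by (intro integrable_continuous_interval cont_Ei1)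
  next
    show "continuous_on (UNIV \<times> cbox 0 pi) (\<lambda>(x, t). complex_of_real ((-2 * sin t) ^ Suc j) * Ei n x t)"
      by (rule cont_Ei2)
  qed auto
  then show ?thesis unfolding cbox_interval by (simp only: Fj_def[abs_def])
qed

lemma exp_i_deriv: "((\<lambda>t. exp (\<i> * complex_of_real (c * t))) has_vector_derivative \<i> * complex_of_real c * exp (\<i> * complex_of_real (c * t))) (at t within S)"
proof -
  have "((\<lambda>z. exp (\<i> * (complex_of_real c * z))) has_field_derivative exp (\<i> * (complex_of_real c * complex_of_real t)) * (\<i> * complex_of_real c)) (at (complex_of_real t))"
    by (auto intro!: derivative_eq_intros)
  from has_vector_derivative_real_field[OF this, of S] show ?thesis
    by (simp add: mult_ac)
qed

lemma exp_2npi: "exp (\<i> * complex_of_real (2 * real n * pi)) = 1"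
proof -
  have e: "\<i> * complex_of_real (2 * real n * pi) = of_nat n * (\<i> * (of_real pi * 2))" by (simp add: mult_ac)
  show ?thesis by (subst e, subst exp_of_nat_mult) simp
qed

lemma exp_2npi': "exp (\<i> * (2 * complex_of_nat n * complex_of_real pi)) = 1"
  using exp_2npi[of n] by simp

lemma bracket_id:
  "complex_of_real (-2 * x * sin t) + (complex_of_real (2 * x * cos t) + 2 * \<i> * of_nat n) *
      (complex_of_real (- 2 * x * cos t) + \<i> * complex_of_real (2 * real n))
   = complex_of_real (4 * x\<^sup>2 * (sin t)\<^sup>2 - 2 * x * sin t - 4 * x\<^sup>2 - 4 * (real n)\<^sup>2)"
proof -
  have e00: "x * (x * (c * (c * 4))) + x * (x * (s * (s * 4))) = (x * (x * 4)) * (s\<^sup>2 + c\<^sup>2)" for s c :: real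
    by (simp add: power2_eq_square algebra_simps)
  note e0 = e00[of "cos t" "sin t"]
  have e: "x * (x * (cos t * (cos t * 4))) + x * (x * (sin t * (sin t * 4))) = x * (x * 4)"
    unfolding e0 by simp
  show ?thesis by (simp add: complex_eq_iff algebra_simps power2_eq_square) (rule e[symmetric])
qed

lemma Fj_ode: "complex_of_real (x\<^sup>2) * Fj n 2 x + complex_of_real x * Fj n 1 x
   - complex_of_real (4 * (x\<^sup>2 + (real n)\<^sup>2)) * Fj n 0 x = complex_of_real (-4 * x)"
proof -
  define G where "G t = (complex_of_real (2 * x * cos t) + 2 * \<i> * of_nat n) * Ei n x t" for t
  define D where "D t = complex_of_real (4 * x\<^sup>2 * (sin t)\<^sup>2 - 2 * x * sin t - 4 * x\<^sup>2 - 4 * (real n)\<^sup>2) * Ei n x t" for t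
  have Gd: "(G has_vector_derivative D t) (at t within {0..pi})" for t
  proof -
    have P: "((\<lambda>t. complex_of_real (2 * x * cos t) + 2 * \<i> * of_nat n) has_vector_derivative complex_of_real (-2 * x * sin t)) (at t within {0..pi})"
    proof -
      have "((\<lambda>t. 2 * x * cos t) has_real_derivative (-2 * x * sin t)) (at t within {0..pi})"
        by (auto intro!: derivative_eq_intros)
      from has_vector_derivative_of_real[OF this] show ?thesis
        by (simp add: has_vector_derivative_add_const)
    qed
    have R: "((\<lambda>t. complex_of_real (exp (-2 * x * sin t))) has_vector_derivative complex_of_real (exp (-2 * x * sin t) * (-2 * x * cos t))) (at t within {0..pi})"
    proof -
      have "((\<lambda>t. exp (-2 * x * sin t)) has_real_derivative exp (-2 * x * sin t) * (-2 * x * cos t)) (at t within {0..pi})"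
        by (auto intro!: derivative_eq_intros)
      from has_vector_derivative_of_real[OF this] show ?thesis .
    qed
    note Q = exp_i_deriv[of "2 * real n" t "{0..pi}"]
    have GG: "G = (\<lambda>t. (complex_of_real (2 * x * cos t) + 2 * \<i> * of_nat n) * (complex_of_real (exp (-2 * x * sin t)) * exp (\<i> * complex_of_real (2 * real n * t))))"
      by (simp add: G_def Ei_alt fun_eq_iff)
    have "(G has_vector_derivative
       ((complex_of_real (2 * x * cos t) + 2 * \<i> * of_nat n) * (complex_of_real (exp (-2 * x * sin t)) * (\<i> * complex_of_real (2 * real n) * exp (\<i> * complex_of_real (2 * real n * t)))
          + complex_of_real (exp (-2 * x * sin t) * (-2 * x * cos t)) * exp (\<i> * complex_of_real (2 * real n * t)))
        + complex_of_real (-2 * x * sin t) * (complex_of_real (exp (-2 * x * sin t)) * exp (\<i> * complex_of_real (2 * real n * t))))) (at t within {0..pi})"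
      unfolding GG by (intro has_vector_derivative_mult P R Q)
    moreover have "((complex_of_real (2 * x * cos t) + 2 * \<i> * of_nat n) * (complex_of_real (exp (-2 * x * sin t)) * (\<i> * complex_of_real (2 * real n) * exp (\<i> * complex_of_real (2 * real n * t)))
          + complex_of_real (exp (-2 * x * sin t) * (-2 * x * cos t)) * exp (\<i> * complex_of_real (2 * real n * t)))
        + complex_of_real (-2 * x * sin t) * (complex_of_real (exp (-2 * x * sin t)) * exp (\<i> * complex_of_real (2 * real n * t))))
      = (complex_of_real (-2 * x * sin t) + (complex_of_real (2 * x * cos t) + 2 * \<i> * of_nat n) *
      (complex_of_real (- 2 * x * cos t) + \<i> * complex_of_real (2 * real n))) * Ei n x t"
      by (simp add: Ei_alt algebra_simps)
    ultimately show ?thesis unfolding D_def bracket_id by simp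
  qed
  have "(D has_integral (G pi - G 0)) {0..pi}"
    by (rule fundamental_theorem_of_calculus) (use Gd in auto)
  moreover have "G pi - G 0 = complex_of_real (-4 * x)"
    by (simp add: G_def Ei_def exp_2npi exp_2npi')
  ultimately have I1: "(D has_integral complex_of_real (-4 * x)) {0..pi}" by simp
  have I2: "((\<lambda>t. complex_of_real (x\<^sup>2) * (complex_of_real ((-2 * sin t) ^ 2) * Ei n x t) + complex_of_real x * (complex_of_real ((-2 * sin t) ^ 1) * Ei n x t)
     - complex_of_real (4 * (x\<^sup>2 + (real n)\<^sup>2)) * (complex_of_real ((-2 * sin t) ^ 0) * Ei n x t)) has_integral
     (complex_of_real (x\<^sup>2) * Fj n 2 x + complex_of_real x * Fj n 1 x
   - complex_of_real (4 * (x\<^sup>2 + (real n)\<^sup>2)) * Fj n 0 x)) {0..pi}"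
    by (intro has_integral_add has_integral_diff has_integral_mult_right Fj_integral)
  have pw: "complex_of_real (x\<^sup>2) * (complex_of_real ((-2 * sin t) ^ 2) * Ei n x t) + complex_of_real x * (complex_of_real ((-2 * sin t) ^ 1) * Ei n x t)
     - complex_of_real (4 * (x\<^sup>2 + (real n)\<^sup>2)) * (complex_of_real ((-2 * sin t) ^ 0) * Ei n x t) = D t" for t
  proof -
    have "complex_of_real (x\<^sup>2) * (complex_of_real ((-2 * sin t) ^ 2) * Ei n x t) + complex_of_real x * (complex_of_real ((-2 * sin t) ^ 1) * Ei n x t)
     - complex_of_real (4 * (x\<^sup>2 + (real n)\<^sup>2)) * (complex_of_real ((-2 * sin t) ^ 0) * Ei n x t)
      = complex_of_real (x\<^sup>2 * (-2 * sin t) ^ 2 + x * (-2 * sin t) - 4 * (x\<^sup>2 + (real n)\<^sup>2)) * Ei n x t"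
      by (simp add: algebra_simps)
    moreover have "x\<^sup>2 * (-2 * sin t) ^ 2 + x * (-2 * sin t) - 4 * (x\<^sup>2 + (real n)\<^sup>2) = 4 * x\<^sup>2 * (sin t)\<^sup>2 - 2 * x * sin t - 4 * x\<^sup>2 - 4 * (real n)\<^sup>2"
      by (simp add: algebra_simps power2_eq_square)
    ultimately show ?thesis unfolding D_def by simp
  qed
  have "(\<lambda>t. complex_of_real (x\<^sup>2) * (complex_of_real ((-2 * sin t) ^ 2) * Ei n x t) + complex_of_real x * (complex_of_real ((-2 * sin t) ^ 1) * Ei n x t)
     - complex_of_real (4 * (x\<^sup>2 + (real n)\<^sup>2)) * (complex_of_real ((-2 * sin t) ^ 0) * Ei n x t)) = D"
    by (rule ext) (rule pw)
  with I2 have "(D has_integral (complex_of_real (x\<^sup>2) * Fj n 2 x + complex_of_real x * Fj n 1 x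
   - complex_of_real (4 * (x\<^sup>2 + (real n)\<^sup>2)) * Fj n 0 x)) {0..pi}" by simp
  from has_integral_unique[OF this I1] show ?thesis .
qed

lemma Fj0_zero: "n \<ge> 1 \<Longrightarrow> Fj n 0 0 = 0"
proof -
  assume n: "n \<ge> 1"
  define H where "H t = exp (\<i> * complex_of_real (2 * real n * t)) / (\<i> * complex_of_real (2 * real n))" for t
  have "(H has_vector_derivative exp (\<i> * complex_of_real (2 * real n * t))) (at t within {0..pi})" for t
  proof -
    from has_vector_derivative_divide[OF exp_i_deriv[of "2 * real n" t "{0..pi}"], of "\<i> * complex_of_real (2 * real n)"]
    show ?thesis using n unfolding H_def by (simp add: field_simps)
  qed
  then have "((\<lambda>t. exp (\<i> * complex_of_real (2 * real n * t))) has_integral (H pi - H 0)) {0..pi}"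
    by (intro fundamental_theorem_of_calculus) auto
  moreover have "H pi - H 0 = 0" by (simp add: H_def exp_2npi exp_2npi')
  ultimately have "((\<lambda>t. exp (\<i> * complex_of_real (2 * real n * t))) has_integral 0) {0..pi}" by simp
  then show ?thesis unfolding Fj_def Ei_def by (simp add: integral_unique)
qed

lemma Fj0_bound: "x \<ge> 0 \<Longrightarrow> cmod (Fj n 0 x) \<le> pi"
proof -
  assume x: "x \<ge> 0"
  have I: "((\<lambda>t. complex_of_real ((-2 * sin t) ^ 0) * Ei n x t) has_integral Fj n 0 x) (cbox 0 pi)"
      using Fj_integral[of 0 n x] by (simp add: cbox_interval)
  have B: "cmod (complex_of_real ((-2 * sin t) ^ 0) * Ei n x t) \<le> 1" if "t \<in> cbox (0::real) pi" for t
  proof -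
    have "sin t \<ge> 0" using that by (intro sin_ge_zero) (auto simp: cbox_interval)
    then have "exp (-2 * x * sin t) \<le> 1" using x by (simp add: mult_nonneg_nonneg)
    then show "cmod (complex_of_real ((-2 * sin t) ^ 0) * Ei n x t) \<le> 1"
      by (simp add: Ei_alt norm_mult)
  qed
  show ?thesis using has_integral_bound[OF _ I B] by simp
qed

lemma maxp:
  fixes u u1 u2 :: "real \<Rightarrow> real"
  assumes d1: "\<And>x. x > 0 \<Longrightarrow> (u has_real_derivative u1 x) (at x)"
    and d2: "\<And>x. x > 0 \<Longrightarrow> (u1 has_real_derivative u2 x) (at x)"
    and e0: "eventually (\<lambda>x. u x < 0) (at_right 0)"
    and einf: "eventually (\<lambda>x. u x < 0) at_top"
    and key: "\<And>x. x > 0 \<Longrightarrow> u x > 0 \<Longrightarrow> u1 x = 0 \<Longrightarrow> u2 x > 0"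
    and x0: "x0 > 0"
  shows "u x0 \<le> 0"
proof (rule ccontr)
  assume "\<not> u x0 \<le> 0"
  then have ux0: "u x0 > 0" by simp
  from e0 obtain a where a: "a > 0" "\<And>y. 0 < y \<Longrightarrow> y < a \<Longrightarrow> u y < 0"
    unfolding eventually_at_right_field by auto
  from einf obtain X where X: "\<And>y. y \<ge> X \<Longrightarrow> u y < 0"
    unfolding eventually_at_top_linorder by auto
  define a' where "a' = a / 2"
  have a'0: "a' > 0" "u a' < 0" using a unfolding a'_def by auto
  have a'x: "a' < x0"
  proof (rule ccontr)
    assume "\<not> a' < x0"
    then have "x0 < a" using a unfolding a'_def by auto
    then show False using a(2)[OF x0] ux0 by simp
  qed
  define b' where "b' = max X (x0 + 1)"
  have b'0: "u b' < 0" "x0 < b'" using X unfolding b'_def by auto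
  have cont: "continuous_on {a'..b'} u"
    using a'0 by (intro continuous_at_imp_continuous_on ballI DERIV_isCont[OF d1]) auto
  obtain p where p: "p \<in> {a'..b'}" "\<And>y. y \<in> {a'..b'} \<Longrightarrow> u y \<le> u p"
    using continuous_attains_sup[OF compact_Icc _ cont] a'x b'0 by auto
  have up: "u p > 0" using p(2)[of x0] a'x b'0 ux0 by auto
  have pa: "a' < p" using p up a'0 by (cases "p = a'") auto
  have pb: "p < b'" using p up b'0 by (cases "p = b'") auto
  have p0: "p > 0" using pa a'0 by simp
  have "u1 p = 0"
  proof (rule DERIV_local_max[OF d1[OF p0]])
    show "0 < min (p - a') (b' - p)" using pa pb by simp
    show "\<forall>y. \<bar>p - y\<bar> < min (p - a') (b' - p) \<longrightarrow> u y \<le> u p"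
      using p(2) by (auto simp: abs_if)
  qed
  moreover have "u2 p > 0" using key[OF p0 up] calculation .
  ultimately obtain d where d: "d > 0" "\<And>h. h > 0 \<Longrightarrow> h < d \<Longrightarrow> 0 < u1 (p + h)"
    using DERIV_pos_inc_right[OF d2[OF p0]] by auto
  define h where "h = min d (b' - p) / 2"
  have mm: "min d (b' - p) \<le> b' - p" "min d (b' - p) \<le> d" "min d (b' - p) > 0" using d pb by auto
  have h2m: "2 * h = min d (b' - p)" unfolding h_def by simp
  have h1: "h > 0" using mm h2m by linarith
  have h2: "h < d" using mm h2m by linarith
  have h3: "p + h \<le> b'" using mm h2m by linarith
  note h = h1 h2 h3
  obtain z where z: "p < z" "z < p + h" "u (p + h) - u p = h * u1 z"
    using MVT2[of p "p + h" u u1] h p0 d1 by auto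
  have "u1 z > 0" using d(2)[of "z - p"] z h by auto
  then have "h * u1 z > 0" using h1 by simp
  then have "u (p + h) > u p" using z(3) by linarith
  moreover have "u (p + h) \<le> u p" using p(2)[of "p + h"] pa h by auto
  ultimately show False by simp
qed


lemma ev_Pl0: "ev (Pl 0) x = x / (1 + x\<^sup>2)" by simp

lemma ode_bound:
  fixes v v1 v2 :: "real \<Rightarrow> real" and n :: nat and K M y :: real
  assumes n: "n \<ge> 1" and K: "K \<ge> 0"
    and d1: "\<And>x. (v has_real_derivative v1 x) (at x)"
    and d2: "\<And>x. (v1 has_real_derivative v2 x) (at x)"
    and v0: "v 0 = 0"
    and bd: "\<And>x. x > 0 \<Longrightarrow> \<bar>v x\<bar> \<le> M"
    and L: "\<And>x. x > 0 \<Longrightarrow> \<bar>x\<^sup>2 * v2 x + x * v1 x - 4 * (real n)\<^sup>2 * (1 + x\<^sup>2) * v x\<bar> \<le> K * x"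
    and y: "y > 0"
  shows "\<bar>v y\<bar> \<le> K / (3 * (real n)\<^sup>2) * (y / (1 + y\<^sup>2))"
proof -
  define nn where "nn = (real n)\<^sup>2"
  have nn1: "nn \<ge> 1" using n unfolding nn_def by simp
  define c where "c = K / (3 * nn)"
  have c0: "c \<ge> 0" using K nn1 unfolding c_def by simp
  have Kc: "K = 3 * nn * c" using nn1 unfolding c_def by simp
  define B where "B = ev (Pl 0)"
  define B1 where "B1 = ev (dl (Pl 0))"
  define B2 where "B2 = ev (dl (dl (Pl 0)))"
  have dB1: "(B has_real_derivative B1 z) (at z)" for z unfolding B_def B1_def by (rule ev_deriv)
  have dB2: "(B1 has_real_derivative B2 z) (at z)" for z unfolding B2_def B1_def by (rule ev_deriv)
  have B0: "B 0 = 0" unfolding B_def by simp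
  have Bz: "(1 + z\<^sup>2) * B z = z" for z
  proof -
    have "1 + z\<^sup>2 > 0" using zero_le_power2[of z] by linarith
    then show ?thesis unfolding B_def ev_Pl0 by simp
  qed
  have Bpos: "B z \<ge> 0" if "z > 0" for z
  proof -
    have "1 + z\<^sup>2 > 0" using zero_le_power2[of z] by linarith
    then show ?thesis unfolding B_def ev_Pl0 using that by simp
  qed
  have Brel: "z\<^sup>2 * B2 z + z * B1 z \<le> z" if "z > 0" for z
  proof -
    have "z\<^sup>2 * B2 z + z * B1 z = 4 * (1 + z\<^sup>2) * ev (Pl 1) z"
      using Pl_rel[of z 0] unfolding B1_def B2_def by simp
    also have "\<dots> \<le> 4 * (1 + z\<^sup>2) * (z / (4 * (1 + z\<^sup>2)))"
    proof -
      have "1 + z\<^sup>2 > 0" using zero_le_power2[of z] by linarith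
      then show ?thesis using Psi1_bound[OF that] by (intro mult_left_mono) auto
    qed
    also have "\<dots> = z"
    proof -
      have "1 + z\<^sup>2 > 0" using zero_le_power2[of z] by linarith
      then show ?thesis by simp
    qed
    finally show ?thesis .
  qed
  have main: "s * v y \<le> c * B y" if s: "s = 1 \<or> s = -1" for s :: real
  proof (rule ccontr)
    assume "\<not> s * v y \<le> c * B y"
    then have gt: "s * v y > c * B y" by simp
    define \<epsilon> where "\<epsilon> = (s * v y - c * B y) / (2 * exp y)"
    have \<epsilon>0: "\<epsilon> > 0" using gt unfolding \<epsilon>_def by simp
    have \<epsilon>e: "\<epsilon> * exp y = (s * v y - c * B y) / 2" unfolding \<epsilon>_def by simp
    define u where "u = (\<lambda>z. s * v z - c * B z - \<epsilon> * exp z)"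
    define u1 where "u1 = (\<lambda>z. s * v1 z - c * B1 z - \<epsilon> * exp z)"
    define u2 where "u2 = (\<lambda>z. s * v2 z - c * B2 z - \<epsilon> * exp z)"
    have du1: "(u has_real_derivative u1 z) (at z)" for z
      unfolding u_def u1_def
      by (intro DERIV_diff DERIV_cmult d1 dB1 DERIV_exp)
    have du2: "(u1 has_real_derivative u2 z) (at z)" for z
      unfolding u1_def u2_def
      by (intro DERIV_diff DERIV_cmult d2 dB2 DERIV_exp)
    have "u y \<le> 0"
    proof (rule maxp[OF du1 du2 _ _ _ y])
      have u0: "u 0 = - \<epsilon>" unfolding u_def using v0 B0 by simp
      have "(u \<longlongrightarrow> u 0) (at 0)" using DERIV_isCont[OF du1[of 0]] by (simp add: isCont_def)
      then have "(u \<longlongrightarrow> u 0) (at_right 0)" by (rule tendsto_mono[OF at_le[OF subset_UNIV]])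
      then show "eventually (\<lambda>x. u x < 0) (at_right 0)"
        using order_tendstoD(2)[of u "u 0" "at_right 0" 0] u0 \<epsilon>0 by simp
    next
      show "eventually (\<lambda>x. u x < 0) at_top"
        unfolding eventually_at_top_linorder
      proof (intro exI allI impI)
        fix z assume z: "z \<ge> max 1 ((\<bar>M\<bar> + 1) / \<epsilon>)"
        then have z0: "z > 0" by simp
        have "(\<bar>M\<bar> + 1) / \<epsilon> \<le> z" using z by simp
        then have "\<bar>M\<bar> + 1 \<le> \<epsilon> * z" using \<epsilon>0 by (simp add: field_simps)
        moreover have "\<epsilon> * z \<le> \<epsilon> * exp z"
        proof -
          have "z \<le> exp z" using exp_ge_add_one_self[of z] by linarith
          then show ?thesis using \<epsilon>0 by (intro mult_left_mono) auto
        qed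
        moreover have "s * v z \<le> \<bar>v z\<bar>" using s by auto
        moreover have "\<bar>v z\<bar> \<le> M" using bd[OF z0] .
        moreover have "c * B z \<ge> 0" using c0 Bpos[OF z0] by simp
        ultimately show "u z < 0" unfolding u_def by linarith
      qed
    next
      fix z :: real assume z: "z > 0" and uz: "u z > 0" and u1z: "u1 z = 0"
      define P where "P = 4 * nn * (1 + z\<^sup>2)"
      define E where "E = exp z"
      define Lv where "Lv = z\<^sup>2 * v2 z + z * v1 z - 4 * (real n)\<^sup>2 * (1 + z\<^sup>2) * v z"
      have Lv_nn: "Lv = z\<^sup>2 * v2 z + z * v1 z - P * v z" unfolding Lv_def P_def nn_def by simp
      have id: "z\<^sup>2 * u2 z = s * Lv + P * u z + (4 * nn * c * z - c * (z\<^sup>2 * B2 z + z * B1 z)) + \<epsilon> * E * (P - z\<^sup>2 - z)"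
      proof -
        have "z\<^sup>2 * u2 z = z\<^sup>2 * u2 z + z * u1 z" using u1z by simp
        also have "\<dots> = s * (z\<^sup>2 * v2 z + z * v1 z) - c * (z\<^sup>2 * B2 z + z * B1 z) - \<epsilon> * E * (z\<^sup>2 + z)"
          unfolding u1_def u2_def E_def by (simp add: algebra_simps)
        also have "\<dots> = s * Lv + P * u z + (4 * nn * c * z - c * (z\<^sup>2 * B2 z + z * B1 z)) + \<epsilon> * E * (P - z\<^sup>2 - z)"
        proof -
          have "P * B z = 4 * nn * ((1 + z\<^sup>2) * B z)" unfolding P_def by (simp add: mult_ac)
          then have "P * B z = 4 * nn * z" using Bz[of z] by simp
          then show ?thesis unfolding Lv_nn u_def E_def by (simp add: algebra_simps)
        qed
        finally show ?thesis .
      qed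
      have t1: "s * Lv \<ge> - (K * z)"
      proof -
        have "\<bar>Lv\<bar> \<le> K * z" unfolding Lv_def by (rule L[OF z])
        then show ?thesis using s by auto
      qed
      have t2: "P * u z > 0" unfolding P_def using nn1 uz by (intro mult_pos_pos) (auto intro: add_pos_nonneg)
      have t3: "c * (z\<^sup>2 * B2 z + z * B1 z) \<le> c * z" using Brel[OF z] c0 by (rule mult_left_mono)
      have t4: "\<epsilon> * E * (P - z\<^sup>2 - z) > 0"
      proof -
        have "P \<ge> 4 * (1 + z\<^sup>2)" unfolding P_def using nn1
          by (intro mult_right_mono) (auto intro: add_nonneg_nonneg)
        moreover have "4 * (1 + z\<^sup>2) - z\<^sup>2 - z > 0"
        proof -
          have eq: "4 * (1 + z\<^sup>2) - z\<^sup>2 - z = 15/4 + (2 * z\<^sup>2 + (z - 1/2)\<^sup>2)"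
            by (simp add: power2_eq_square algebra_simps)
          have "0 \<le> 2 * z\<^sup>2 + (z - 1/2)\<^sup>2" by simp
          then show ?thesis unfolding eq by linarith
        qed
        ultimately have "P - z\<^sup>2 - z > 0" by linarith
        then show ?thesis using \<epsilon>0 unfolding E_def by simp
      qed
      have t5: "K * z \<le> 4 * nn * c * z - c * z"
      proof -
        have "nn * (c * z) \<ge> 1 * (c * z)" using nn1 c0 z by (intro mult_right_mono) auto
        then show ?thesis unfolding Kc by (simp add: algebra_simps)
      qed
      have "z\<^sup>2 * u2 z > 0" unfolding id using t1 t2 t3 t4 t5 by linarith
      then show "u2 z > 0" using z by (simp add: zero_less_mult_iff)
    qed
    then have "s * v y \<le> c * B y + \<epsilon> * exp y" unfolding u_def by simp
    then have "s * v y \<le> c * B y + (s * v y - c * B y) / 2" unfolding \<epsilon>e .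
    moreover have "\<And>a b :: real. a \<le> b + (a - b) / 2 \<Longrightarrow> b < a \<Longrightarrow> False" by (simp add: field_simps)
    ultimately show False using gt by blast
  qed
  have "v y \<le> c * B y" using main[of 1] by simp
  moreover have "- v y \<le> c * B y" using main[of "-1"] by simp
  ultimately have "\<bar>v y\<bar> \<le> c * B y" by simp
  then show ?thesis unfolding c_def nn_def B_def ev_Pl0 .
qed


definition V :: "nat \<Rightarrow> nat \<Rightarrow> real \<Rightarrow> complex" where
  "V n j x = of_nat n ^ Suc j * Fj n j (real n * x)"

lemma varphi_V: "varphi n x = V n 0 x" by (simp add: varphi_def V_def phi_Fj)

lemma V_deriv: "(V n j has_vector_derivative V n (Suc j) x) (at x)"
proof -
  have "((\<lambda>x. real n * x) has_real_derivative real n) (at x)" by (auto intro!: derivative_eq_intros)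
  then have c: "((\<lambda>x. real n * x) has_vector_derivative real n) (at x)"
    by (simp add: has_real_derivative_iff_has_vector_derivative)
  have "((Fj n j \<circ> (\<lambda>x. real n * x)) has_vector_derivative real n *\<^sub>R Fj n (Suc j) (real n * x)) (at x)"
    by (rule vector_diff_chain_at[OF c Fj_deriv])
  from has_vector_derivative_mult_right[OF this, where a = "of_nat n ^ Suc j"]
  show ?thesis unfolding V_def[abs_def] comp_def by (simp add: scaleR_conv_of_real mult_ac)
qed

lemma V_ode: "complex_of_real (x\<^sup>2) * V n (Suc (Suc 0)) x + complex_of_real x * V n (Suc 0) x
   - complex_of_real (4 * (real n)\<^sup>2 * (1 + x\<^sup>2)) * V n 0 x = complex_of_real (-4 * (real n)\<^sup>2 * x)"
proof -
  have e: "complex_of_real ((real n * x)\<^sup>2) * Fj n 2 (real n * x) + complex_of_real (real n * x) * Fj n 1 (real n * x)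
   - complex_of_real (4 * ((real n * x)\<^sup>2 + (real n)\<^sup>2)) * Fj n 0 (real n * x) = complex_of_real (-4 * (real n * x))"
    by (rule Fj_ode)
  have "complex_of_real (x\<^sup>2) * V n (Suc (Suc 0)) x + complex_of_real x * V n (Suc 0) x
   - complex_of_real (4 * (real n)\<^sup>2 * (1 + x\<^sup>2)) * V n 0 x
    = of_nat n * (complex_of_real ((real n * x)\<^sup>2) * Fj n 2 (real n * x) + complex_of_real (real n * x) * Fj n 1 (real n * x)
   - complex_of_real (4 * ((real n * x)\<^sup>2 + (real n)\<^sup>2)) * Fj n 0 (real n * x))"
    unfolding V_def by (simp add: algebra_simps power2_eq_square numeral_2_eq_2)
  also have "\<dots> = of_nat n * complex_of_real (-4 * (real n * x))" using e by simp
  also have "\<dots> = complex_of_real (-4 * (real n)\<^sup>2 * x)" by (simp add: power2_eq_square)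
  finally show ?thesis .
qed

lemma telescope:
  assumes n: "n \<ge> 1"
  shows "(\<Sum>k=0..N. real n powr (-2 * real k) * (f (Suc k) - (real n)\<^sup>2 * f k))
     = real n powr (-2 * real N) * f (Suc N) - (real n)\<^sup>2 * f 0"
proof (induction N)
  case 0 then show ?case using n by simp
next
  case (Suc N)
  have np: "real n > 0" using n by simp
  have pw: "real n powr (-2 * real (Suc N)) * (real n)\<^sup>2 = real n powr (-2 * real N)"
  proof -
    have "real n powr (-2 * real (Suc N)) * (real n)\<^sup>2 = real n powr (-2 * real (Suc N)) * real n powr 2"
      by (simp only: powr_numeral[OF less_imp_le[OF np]])
    also have "\<dots> = real n powr (-2 * real (Suc N) + 2)" by (simp only: powr_add)
    also have "real n powr (-2 * real (Suc N) + 2) = real n powr (-2 * real N)" by simp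
    finally show ?thesis .
  qed
  show ?case using Suc pw by (simp add: algebra_simps)
qed

lemma cw_abs: "\<bar>ev cs x\<bar> \<le> \<bar>cw cs\<bar>" if "invr cs" "x > 0"
proof -
  have w: "x / (1 + x\<^sup>2) \<le> 1"
  proof -
    have "x \<le> 1 + x\<^sup>2" using zero_le_power2[of "x - 1"] that(2) by (simp add: power2_eq_square algebra_simps)
    moreover have "1 + x\<^sup>2 > 0" using zero_le_power2[of x] by linarith
    ultimately show ?thesis by simp
  qed
  have "\<bar>ev cs x\<bar> \<le> cw cs * (x / (1 + x\<^sup>2))" by (rule ev_bound[OF that])
  also have "\<dots> \<le> \<bar>cw cs\<bar> * (x / (1 + x\<^sup>2))" by (intro mult_right_mono) (use that in auto)
  also have "\<dots> \<le> \<bar>cw cs\<bar> * 1" using w by (intro mult_left_mono) auto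
  finally show ?thesis by simp
qed


lemma cw_nonneg: "cw cs \<ge> 0"
  unfolding cw_def by (induction cs) (auto split: prod.splits)

lemma main_bound:
  assumes n: "n \<ge> 1" and x: "x > 0"
  shows "cmod (g n N x) \<le> 2 * (4 * real n powr (-2 * real N) * cw (Pl (Suc N)) / (3 * (real n)\<^sup>2)) * (x / (1 + x\<^sup>2))"
proof -
  define q where "q = (\<lambda>k::nat. real n powr (-2 * real k))"
  have q0: "q k > 0" for k using n unfolding q_def by simp
  define S0 where "S0 = (\<lambda>z. \<Sum>k=0..N. q k * ev (Pl k) z)"
  define S1 where "S1 = (\<lambda>z. \<Sum>k=0..N. q k * ev (dl (Pl k)) z)"
  define S2 where "S2 = (\<lambda>z. \<Sum>k=0..N. q k * ev (dl (dl (Pl k))) z)"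
  have dS0: "(S0 has_real_derivative S1 z) (at z)" for z
    unfolding S0_def S1_def by (intro DERIV_sum DERIV_cmult ev_deriv)
  have dS1: "(S1 has_real_derivative S2 z) (at z)" for z
    unfolding S2_def S1_def by (intro DERIV_sum DERIV_cmult ev_deriv)
  have gE: "g n N z = V n 0 z - complex_of_real (S0 z)" for z
    unfolding g_def varphi_V S0_def q_def Psi_ev by simp
  define A where "A = cw (Pl (Suc N))"
  have A0: "A \<ge> 0" unfolding A_def by (rule cw_nonneg)
  define K where "K = 4 * q N * A"
  have K0: "K \<ge> 0" unfolding K_def using q0[of N] A0 by simp
  have S00: "S0 0 = 0" unfolding S0_def by (simp add: ev_zero invr_Pl)
  have V00: "V n 0 0 = 0" unfolding V_def using Fj0_zero[OF n] by simp
  define M where "M = real n * pi + (\<Sum>k=0..N. q k * \<bar>cw (Pl k)\<bar>)"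
  have Vb: "cmod (V n 0 z) \<le> real n * pi" if "z > 0" for z
  proof -
    have "cmod (V n 0 z) = real n * cmod (Fj n 0 (real n * z))" unfolding V_def by (simp add: norm_mult)
    also have "\<dots> \<le> real n * pi" using that by (intro mult_left_mono Fj0_bound) auto
    finally show ?thesis .
  qed
  have Sb: "\<bar>S0 z\<bar> \<le> (\<Sum>k=0..N. q k * \<bar>cw (Pl k)\<bar>)" if "z > 0" for z
  proof -
    have "\<bar>S0 z\<bar> \<le> (\<Sum>k=0..N. \<bar>q k * ev (Pl k) z\<bar>)" unfolding S0_def by (rule sum_abs)
    also have "\<dots> \<le> (\<Sum>k=0..N. q k * \<bar>cw (Pl k)\<bar>)"
    proof (rule sum_mono)
      fix k assume "k \<in> {0..N}"
      have "\<bar>q k * ev (Pl k) z\<bar> = q k * \<bar>ev (Pl k) z\<bar>" using q0[of k] by (simp add: abs_mult)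
      also have "\<dots> \<le> q k * \<bar>cw (Pl k)\<bar>" using q0[of k] cw_abs[OF invr_Pl that] by (intro mult_left_mono) auto
      finally show "\<bar>q k * ev (Pl k) z\<bar> \<le> q k * \<bar>cw (Pl k)\<bar>" .
    qed
    finally show ?thesis .
  qed
  have ReLV: "z\<^sup>2 * Re (V n (Suc (Suc 0)) z) + z * Re (V n (Suc 0) z) - 4 * (real n)\<^sup>2 * (1 + z\<^sup>2) * Re (V n 0 z) = -4 * (real n)\<^sup>2 * z" for z
    using arg_cong[OF V_ode[of z n], of Re] by simp
  have ImLV: "z\<^sup>2 * Im (V n (Suc (Suc 0)) z) + z * Im (V n (Suc 0) z) - 4 * (real n)\<^sup>2 * (1 + z\<^sup>2) * Im (V n 0 z) = 0" for z
    using arg_cong[OF V_ode[of z n], of Im] by simp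
  have LS: "z\<^sup>2 * S2 z + z * S1 z - 4 * (real n)\<^sup>2 * (1 + z\<^sup>2) * S0 z
      = 4 * (1 + z\<^sup>2) * (q N * ev (Pl (Suc N)) z) - 4 * (real n)\<^sup>2 * z" if z: "z > 0" for z
  proof -
    have "z\<^sup>2 * S2 z + z * S1 z - 4 * (real n)\<^sup>2 * (1 + z\<^sup>2) * S0 z
       = (\<Sum>k=0..N. q k * (z\<^sup>2 * ev (dl (dl (Pl k))) z + z * ev (dl (Pl k)) z - 4 * (real n)\<^sup>2 * (1 + z\<^sup>2) * ev (Pl k) z))"
      unfolding S0_def S1_def S2_def by (simp add: sum_distrib_left sum_subtractf sum.distrib algebra_simps)
    also have "\<dots> = (\<Sum>k=0..N. 4 * (1 + z\<^sup>2) * (q k * (ev (Pl (Suc k)) z - (real n)\<^sup>2 * ev (Pl k) z)))"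
    proof (rule sum.cong)
      fix k assume "k \<in> {0..N}"
      have r: "z\<^sup>2 * ev (dl (dl (Pl k))) z + z * ev (dl (Pl k)) z = 4 * (1 + z\<^sup>2) * ev (Pl (Suc k)) z"
        using Pl_rel[of z k] by simp
      show "q k * (z\<^sup>2 * ev (dl (dl (Pl k))) z + z * ev (dl (Pl k)) z - 4 * (real n)\<^sup>2 * (1 + z\<^sup>2) * ev (Pl k) z)
          = 4 * (1 + z\<^sup>2) * (q k * (ev (Pl (Suc k)) z - (real n)\<^sup>2 * ev (Pl k) z))"
        unfolding r by (simp add: algebra_simps)
    qed simp
    also have "\<dots> = 4 * (1 + z\<^sup>2) * (\<Sum>k=0..N. q k * (ev (Pl (Suc k)) z - (real n)\<^sup>2 * ev (Pl k) z))"
      by (simp add: sum_distrib_left)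
    also have "(\<Sum>k=0..N. q k * (ev (Pl (Suc k)) z - (real n)\<^sup>2 * ev (Pl k) z)) = q N * ev (Pl (Suc N)) z - (real n)\<^sup>2 * ev (Pl 0) z"
      unfolding q_def by (rule telescope[OF n])
    also have "4 * (1 + z\<^sup>2) * (q N * ev (Pl (Suc N)) z - (real n)\<^sup>2 * ev (Pl 0) z) = 4 * (1 + z\<^sup>2) * (q N * ev (Pl (Suc N)) z) - 4 * (real n)\<^sup>2 * z"
    proof -
      have "1 + z\<^sup>2 > 0" using zero_le_power2[of z] by linarith
      then have e0: "(1 + z\<^sup>2) * ev (Pl 0) z = z" by simp
      have gen: "4 * (1 + z\<^sup>2) * (a - (real n)\<^sup>2 * e) = 4 * (1 + z\<^sup>2) * a - 4 * (real n)\<^sup>2 * z"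
        if h: "(1 + z\<^sup>2) * e = z" for a e :: real
      proof -
        have "4 * (1 + z\<^sup>2) * (a - (real n)\<^sup>2 * e) = 4 * (1 + z\<^sup>2) * a - 4 * (real n)\<^sup>2 * ((1 + z\<^sup>2) * e)"
          by (simp add: algebra_simps)
        then show ?thesis unfolding h .
      qed
      show ?thesis by (rule gen[OF e0])
    qed
    finally show ?thesis .
  qed
  have evb: "\<bar>4 * (1 + z\<^sup>2) * (q N * ev (Pl (Suc N)) z)\<bar> \<le> K * z" if z: "z > 0" for z
  proof -
    have w: "1 + z\<^sup>2 > 0" using zero_le_power2[of z] by linarith
    have "\<bar>4 * (1 + z\<^sup>2) * (q N * ev (Pl (Suc N)) z)\<bar> = 4 * (1 + z\<^sup>2) * q N * \<bar>ev (Pl (Suc N)) z\<bar>"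
      using w q0[of N] by (simp add: abs_mult)
    also have "\<dots> \<le> 4 * (1 + z\<^sup>2) * q N * (A * (z / (1 + z\<^sup>2)))"
      unfolding A_def by (rule mult_left_mono[OF ev_bound[OF invr_Pl z]]) (use w q0[of N] in auto)
    also have "\<dots> = K * z"
    proof -
      have gen: "4 * ww * q N * (A * (z / ww)) = 4 * q N * A * z" if "ww > 0" for ww :: real
        using that by (simp add: field_simps)
      show ?thesis unfolding K_def by (rule gen[OF w])
    qed
    finally show ?thesis .
  qed
  define v0 where "v0 = (\<lambda>z. Re (V n 0 z) - S0 z)"
  define v1 where "v1 = (\<lambda>z. Re (V n (Suc 0) z) - S1 z)"
  define v2 where "v2 = (\<lambda>z. Re (V n (Suc (Suc 0)) z) - S2 z)"
  have "\<bar>v0 x\<bar> \<le> K / (3 * (real n)\<^sup>2) * (x / (1 + x\<^sup>2))"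
  proof (rule ode_bound[OF n K0 _ _ _ _ _ x])
    show "(v0 has_real_derivative v1 z) (at z)" for z
      unfolding v0_def v1_def by (intro DERIV_diff has_field_derivative_Re V_deriv dS0)
    show "(v1 has_real_derivative v2 z) (at z)" for z
      unfolding v2_def v1_def by (intro DERIV_diff has_field_derivative_Re V_deriv dS1)
    show "v0 0 = 0" unfolding v0_def using V00 S00 by simp
    show "\<bar>v0 z\<bar> \<le> M" if "z > 0" for z
    proof -
      have "\<bar>Re (V n 0 z)\<bar> \<le> real n * pi" using abs_Re_le_cmod[of "V n 0 z"] Vb[OF that] by linarith
      then show ?thesis unfolding v0_def M_def using Sb[OF that] by linarith
    qed
    show "\<bar>z\<^sup>2 * v2 z + z * v1 z - 4 * (real n)\<^sup>2 * (1 + z\<^sup>2) * v0 z\<bar> \<le> K * z" if "z > 0" for z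
    proof -
      have "z\<^sup>2 * v2 z + z * v1 z - 4 * (real n)\<^sup>2 * (1 + z\<^sup>2) * v0 z
        = (z\<^sup>2 * Re (V n (Suc (Suc 0)) z) + z * Re (V n (Suc 0) z) - 4 * (real n)\<^sup>2 * (1 + z\<^sup>2) * Re (V n 0 z))
          - (z\<^sup>2 * S2 z + z * S1 z - 4 * (real n)\<^sup>2 * (1 + z\<^sup>2) * S0 z)"
        unfolding v0_def v1_def v2_def by (simp add: algebra_simps)
      also have "\<dots> = - (4 * (1 + z\<^sup>2) * (q N * ev (Pl (Suc N)) z))" unfolding ReLV LS[OF that] by simp
      finally show ?thesis using evb[OF that] by simp
    qed
  qed
  moreover have "\<bar>Im (V n 0 x)\<bar> \<le> K / (3 * (real n)\<^sup>2) * (x / (1 + x\<^sup>2))"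
  proof (rule ode_bound[OF n K0 _ _ _ _ _ x, where M = "real n * pi"])
    show "((\<lambda>z. Im (V n 0 z)) has_real_derivative Im (V n (Suc 0) z)) (at z)" for z
      by (intro has_field_derivative_Im V_deriv)
    show "((\<lambda>z. Im (V n (Suc 0) z)) has_real_derivative Im (V n (Suc (Suc 0)) z)) (at z)" for z
      by (intro has_field_derivative_Im V_deriv)
    show "Im (V n 0 0) = 0" using V00 by simp
    show "\<bar>Im (V n 0 z)\<bar> \<le> real n * pi" if "z > 0" for z
      using abs_Im_le_cmod[of "V n 0 z"] Vb[OF that] by linarith
    show "\<bar>z\<^sup>2 * Im (V n (Suc (Suc 0)) z) + z * Im (V n (Suc 0) z) - 4 * (real n)\<^sup>2 * (1 + z\<^sup>2) * Im (V n 0 z)\<bar> \<le> K * z" if "z > 0" for z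
      unfolding ImLV using K0 that by simp
  qed
  moreover have "cmod (g n N x) \<le> \<bar>v0 x\<bar> + \<bar>Im (V n 0 x)\<bar>"
    using cmod_le[of "g n N x"] unfolding gE v0_def by simp
  ultimately have "cmod (g n N x) \<le> 2 * (K / (3 * (real n)\<^sup>2) * (x / (1 + x\<^sup>2)))" by linarith
  then show ?thesis unfolding K_def A_def q_def by simp
qed


lemma x_bound:
  fixes x \<delta> :: real
  assumes x: "x > 0" and d: "0 \<le> \<delta>" "\<delta> \<le> 1"
  shows "x / (1 + x\<^sup>2) \<le> 2 * (x powr \<delta> / (1 + x))"
proof (cases "x \<le> 1")
  case True
  have "x = x powr 1" using x by simp
  also have "\<dots> \<le> x powr \<delta>" using d x True by (intro powr_mono') auto
  finally have xd: "x \<le> x powr \<delta>" .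
  have w1: "1 \<le> 1 + x\<^sup>2" by simp
  have w0: "0 < 1 + x\<^sup>2" using w1 by linarith
  have "x / (1 + x\<^sup>2) \<le> x / 1" using x w1 w0 by (intro divide_left_mono) auto
  then have "x / (1 + x\<^sup>2) \<le> x" by simp
  also have "x \<le> 2 * (x / (1 + x))" using x True by (simp add: field_simps)
  also have "\<dots> \<le> 2 * (x powr \<delta> / (1 + x))" using xd x by (intro mult_left_mono divide_right_mono) auto
  finally show ?thesis .
next
  case False
  have xd: "1 \<le> x powr \<delta>" using False d by (intro ge_one_powr_ge_zero) auto
  have "x / (1 + x\<^sup>2) \<le> 2 / (1 + x)"
  proof -
    have "1 * x \<le> x * x" using False by (intro mult_right_mono) auto
    then have "x * (1 + x) \<le> 2 * (1 + x\<^sup>2)" by (simp add: power2_eq_square algebra_simps)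
    moreover have "1 + x\<^sup>2 > 0" using zero_le_power2[of x] by linarith
    ultimately show ?thesis using x by (simp add: field_simps)
  qed
  also have "\<dots> \<le> 2 * (x powr \<delta> / (1 + x))" using xd x by (simp add: divide_right_mono)
  finally show ?thesis .
qed

theorem proposition3p3:
  fixes N :: nat and \<delta> :: real
  assumes "0 \<le> \<delta>" and "\<delta> < 1/3"
  shows "\<exists>C>0. \<forall>n::nat. \<forall>x::real. n \<ge> 1 \<longrightarrow> x > 0 \<longrightarrow>
           cmod (g n N x) \<le> C / real n powr (2 * real N + 2/3 - \<delta>) * (x powr \<delta> / (1 + x))"
proof -
  define A where "A = cw (Pl (Suc N))"
  have A0: "A \<ge> 0" unfolding A_def by (rule cw_nonneg)
  define C where "C = 16/3 * (A + 1)"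
  show ?thesis
  proof (intro exI[of _ C] conjI allI impI)
    show "C > 0" unfolding C_def using A0 by simp
  next
    fix n :: nat and x :: real
    assume n: "n \<ge> 1" and x: "x > 0"
    have np: "real n > 0" using n by simp
    define e where "e = 2 * real N + 2/3 - \<delta>"
    have p1: "real n powr (-2 * real N) / (real n)\<^sup>2 \<le> real n powr (- e)"
    proof -
      have "real n powr (-2 * real N) / (real n)\<^sup>2 = real n powr (-2 * real N) / real n powr 2"
        by (simp only: powr_numeral[OF less_imp_le[OF np]])
      also have "\<dots> = real n powr (-2 * real N - 2)" by (simp only: powr_diff)
      also have "\<dots> \<le> real n powr (- e)" unfolding e_def using assms n by (intro powr_mono) auto
      finally show ?thesis .
    qed
    have p2: "x / (1 + x\<^sup>2) \<le> 2 * (x powr \<delta> / (1 + x))" using x_bound[OF x assms(1)] assms(2) by simp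
    have m1: "8/3 * A * (real n powr (-2 * real N) / (real n)\<^sup>2) \<le> 8/3 * (A + 1) * real n powr (- e)"
      by (rule mult_mono) (use p1 A0 in auto)
    have w: "1 + x\<^sup>2 > 0" using zero_le_power2[of x] by linarith
    have mb: "cmod (g n N x) \<le> 8/3 * A * (real n powr (-2 * real N) / (real n)\<^sup>2) * (x / (1 + x\<^sup>2))"
      using main_bound[OF n x, of N] unfolding A_def by (simp add: field_simps)
    also have "\<dots> \<le> 8/3 * (A + 1) * real n powr (- e) * (2 * (x powr \<delta> / (1 + x)))"
      by (rule mult_mono[OF m1 p2]) (use A0 x w in auto)
    also have "\<dots> = C / real n powr e * (x powr \<delta> / (1 + x))"
    proof -
      have pe: "real n powr e > 0" using np by simp
      show ?thesis unfolding C_def powr_minus_divide using pe by (simp add: field_simps)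
    qed
    finally show "cmod (g n N x) \<le> C / real n powr (2 * real N + 2/3 - \<delta>) * (x powr \<delta> / (1 + x))"
      unfolding e_def .
  qed
qed

end
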